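(* Let $(\mathfrak g,[\cdot,\cdot]_{\mathfrak g},E)$ be an ENL algebra and $r\in\mathfrak g\otimes\mathfrak g$ skew-symmetric. Define $r_+:\mathfrak g^*\to\mathfrak g$ by $\langle\eta,r_+(\xi)\rangle=\langle\xi\otimes\eta,r\rangle$. Then $r_+$ is an ENE-relative Rota–Baxter operator on $(\mathfrak g,[\cdot,\cdot]_{\mathfrak g},E)$ with respect to the coadjoint ENE-representation $(\mathfrak g^*;E^*,\mathrm{ad}^* )$ if and only if $r$ is an EN $r$-matrix, i.e. $[\![r,r]\!]=0$ and $(\mathrm{Id}\otimes E-E\otimes\mathrm{Id})(r)=0$.
   Context: Vector spaces are finite-dimensional over an algebraically closed field of characteristic zero. An ENL algebra is a Lie algebra with linear $E$ satisfying $E[x,y]=[x,Ey]$ for all $x,y$. Coadjoint ENE-representation: $\langle\mathrm{ad}^*_x\xi,y\rangle=-\langle\xi,[x,y]_{\mathfrak g}\rangle$ and $E^*$ the dual map of $E$. An ENE-relative Rota–Baxter operator with respect to an ENE-representation $(W;T,\rho)$ is a linear $K:W\to\mathfrak g$ with $[Ku,Kv]_{\mathfrak g}=K(\rho(Ku)v-\rho(Kv)u)$ for all $u,v$ and $E\circ K=K\circ T$. For $r=\sum a_i\otimes b_i$, $[\![r,r]\!]=[r_{12},r_{13}]+[r_{13},r_{23}]+[r_{12},r_{23}]$ in $U(\mathfrak g)^{\otimes3}$ with $r_{12}=\sum a_i\otimes b_i\otimes1$, $r_{13}=\sum a_i\otimes1\otimes b_i$, $r_{23}=\sum1\otimes a_i\otimes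 b_i$. *)

theory Defs
  imports "HOL-Computational_Algebra.Polynomial"
begin

text \<open>Coordinates: the finite-dimensional space g is identified with 'n \<Rightarrow> 'k via a
fixed basis e_1..e_n (index type 'n finite); its dual g* is identified with 'n \<Rightarrow> 'k via
the dual basis. Tensors in g\<otimes>g and g\<otimes>g\<otimes>g are given by their coefficient
arrays in the basis e_i\<otimes>e_j (resp. e_i\<otimes>e_j\<otimes>e_k).\<close>

definition alg_closed :: "'k::field itself \<Rightarrow> bool" where
  "alg_closed _ \<longleftrightarrow> (\<forall>p :: 'k poly. degree p \<noteq> 0 \<longrightarrow> (\<exists>x. poly p x = 0))"

definition vadd :: "('n \<Rightarrow> 'k::field) \<Rightarrow> ('n \<Rightarrow> 'k) \<Rightarrow> ('n \<Rightarrow> 'k)" where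
  "vadd x y = (\<lambda>i. x i + y i)"

definition vsub :: "('n \<Rightarrow> 'k::field) \<Rightarrow> ('n \<Rightarrow> 'k) \<Rightarrow> ('n \<Rightarrow> 'k)" where
  "vsub x y = (\<lambda>i. x i - y i)"

definition smul :: "'k::field \<Rightarrow> ('n \<Rightarrow> 'k) \<Rightarrow> ('n \<Rightarrow> 'k)" where
  "smul c x = (\<lambda>i. c * x i)"

definition lin :: "(('m \<Rightarrow> 'k::field) \<Rightarrow> ('n \<Rightarrow> 'k)) \<Rightarrow> bool" where
  "lin f \<longleftrightarrow> (\<forall>x y. f (vadd x y) = vadd (f x) (f y)) \<and> (\<forall>c x. f (smul c x) = smul c (f x))"

definition basis_vec :: "'n \<Rightarrow> ('n \<Rightarrow> 'k::field)" where
  "basis_vec j = (\<lambda>i. if i = j then 1 else 0)"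

definition pair :: "('n::finite \<Rightarrow> 'k::field) \<Rightarrow> ('n \<Rightarrow> 'k) \<Rightarrow> 'k" where
  "pair \<xi> x = (\<Sum>i\<in>UNIV. \<xi> i * x i)"

definition lie_algebra :: "(('n::finite \<Rightarrow> 'k::field) \<Rightarrow> ('n \<Rightarrow> 'k) \<Rightarrow> ('n \<Rightarrow> 'k)) \<Rightarrow> bool" where
  "lie_algebra br \<longleftrightarrow>
     (\<forall>y. lin (\<lambda>x. br x y)) \<and> (\<forall>x. lin (br x)) \<and>
     (\<forall>x. br x x = (\<lambda>_. 0)) \<and>
     (\<forall>x y z. vadd (vadd (br x (br y z)) (br y (br z x))) (br z (br x y)) = (\<lambda>_. 0))"

definition ENL_algebra :: "(('n::finite \<Rightarrow> 'k::field) \<Rightarrow> ('n \<Rightarrow> 'k) \<Rightarrow> ('n \<Rightarrow> 'k))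
    \<Rightarrow> (('n \<Rightarrow> 'k) \<Rightarrow> ('n \<Rightarrow> 'k)) \<Rightarrow> bool" where
  "ENL_algebra br E \<longleftrightarrow> lie_algebra br \<and> lin E \<and> (\<forall>x y. E (br x y) = br x (E y))"

definition ENE_relative_RB ::
  "(('n::finite \<Rightarrow> 'k::field) \<Rightarrow> ('n \<Rightarrow> 'k) \<Rightarrow> ('n \<Rightarrow> 'k)) \<Rightarrow> (('n \<Rightarrow> 'k) \<Rightarrow> ('n \<Rightarrow> 'k))
   \<Rightarrow> (('m \<Rightarrow> 'k) \<Rightarrow> ('m \<Rightarrow> 'k)) \<Rightarrow> (('n \<Rightarrow> 'k) \<Rightarrow> ('m \<Rightarrow> 'k) \<Rightarrow> ('m \<Rightarrow> 'k))
   \<Rightarrow> (('m \<Rightarrow> 'k) \<Rightarrow> ('n \<Rightarrow> 'k)) \<Rightarrow> bool" where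
  "ENE_relative_RB br E T rho K \<longleftrightarrow>
     lin K \<and>
     (\<forall>u v. br (K u) (K v) = K (vsub (rho (K u) v) (rho (K v) u))) \<and>
     (\<forall>u. E (K u) = K (T u))"

text \<open>Coadjoint representation: <ad*_x xi, y> = - <xi, [x,y]>, i.e. in dual coordinates.\<close>
definition coad :: "(('n::finite \<Rightarrow> 'k::field) \<Rightarrow> ('n \<Rightarrow> 'k) \<Rightarrow> ('n \<Rightarrow> 'k))
   \<Rightarrow> ('n \<Rightarrow> 'k) \<Rightarrow> ('n \<Rightarrow> 'k) \<Rightarrow> ('n \<Rightarrow> 'k)" where
  "coad br x \<xi> = (\<lambda>j. - pair \<xi> (br x (basis_vec j)))"

definition dual_map :: "(('n::finite \<Rightarrow> 'k::field) \<Rightarrow> ('n \<Rightarrow> 'k)) \<Rightarrow> ('n \<Rightarrow> 'k) \<Rightarrow> ('n \<Rightarrow> 'k)" where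
  "dual_map E \<xi> = (\<lambda>j. pair \<xi> (E (basis_vec j)))"

text \<open>r = sum r i j e_i\<otimes>e_j; r_+ with <eta, r_+ xi> = <xi\<otimes>eta, r> = sum xi_i eta_j r_ij.\<close>
definition r_plus :: "('n::finite \<Rightarrow> 'n \<Rightarrow> 'k::field) \<Rightarrow> ('n \<Rightarrow> 'k) \<Rightarrow> ('n \<Rightarrow> 'k)" where
  "r_plus r \<xi> = (\<lambda>j. \<Sum>i\<in>UNIV. \<xi> i * r i j)"

definition skew_tensor :: "('n \<Rightarrow> 'n \<Rightarrow> 'k::field) \<Rightarrow> bool" where
  "skew_tensor r \<longleftrightarrow> (\<forall>i j. r i j = - r j i)"

text \<open>Coefficients of [[r,r]] = [r12,r13] + [r13,r23] + [r12,r23] in g\<otimes>g\<otimes>g.\<close>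
definition CYB :: "(('n::finite \<Rightarrow> 'k::field) \<Rightarrow> ('n \<Rightarrow> 'k) \<Rightarrow> ('n \<Rightarrow> 'k))
   \<Rightarrow> ('n \<Rightarrow> 'n \<Rightarrow> 'k) \<Rightarrow> 'n \<Rightarrow> 'n \<Rightarrow> 'n \<Rightarrow> 'k" where
  "CYB br r a b c =
     (\<Sum>i\<in>UNIV. \<Sum>k\<in>UNIV. r i b * r k c * br (basis_vec i) (basis_vec k) a)
   + (\<Sum>j\<in>UNIV. \<Sum>l\<in>UNIV. r a j * r b l * br (basis_vec j) (basis_vec l) c)
   + (\<Sum>j\<in>UNIV. \<Sum>k\<in>UNIV. r a j * r k c * br (basis_vec j) (basis_vec k) b)"

text \<open>Coefficients of (Id\<otimes>E - E\<otimes>Id)(r).\<close>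
definition IdE_minus_EId :: "(('n::finite \<Rightarrow> 'k::field) \<Rightarrow> ('n \<Rightarrow> 'k))
   \<Rightarrow> ('n \<Rightarrow> 'n \<Rightarrow> 'k) \<Rightarrow> 'n \<Rightarrow> 'n \<Rightarrow> 'k" where
  "IdE_minus_EId E r a b =
     (\<Sum>j\<in>UNIV. r a j * E (basis_vec j) b) - (\<Sum>i\<in>UNIV. r i b * E (basis_vec i) a)"

definition EN_r_matrix :: "(('n::finite \<Rightarrow> 'k::field) \<Rightarrow> ('n \<Rightarrow> 'k) \<Rightarrow> ('n \<Rightarrow> 'k))
   \<Rightarrow> (('n \<Rightarrow> 'k) \<Rightarrow> ('n \<Rightarrow> 'k)) \<Rightarrow> ('n \<Rightarrow> 'n \<Rightarrow> 'k) \<Rightarrow> bool" where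
  "EN_r_matrix br E r \<longleftrightarrow>
     (\<forall>a b c. CYB br r a b c = 0) \<and> (\<forall>a b. IdE_minus_EId E r a b = 0)"

end

theory Submission
  imports Defs
begin

lemma basis_sum: "(\<lambda>j. \<Sum>i\<in>UNIV. (x::'n::finite \<Rightarrow> 'k::field) i * basis_vec i j) = x"
  by (rule ext) (simp add: basis_vec_def if_distrib cong: if_cong)

lemma lin_zero: "lin f \<Longrightarrow> f (\<lambda>_. 0) = (\<lambda>_. 0)"
proof -
  assume "lin f"
  then have "f (smul 0 (\<lambda>_. 0)) = smul 0 (f (\<lambda>_. 0))" by (simp add: lin_def)
  then show ?thesis by (simp add: smul_def)
qed

lemma lin_expand_set:
  fixes f :: "('n \<Rightarrow> 'k::field) \<Rightarrow> ('m \<Rightarrow> 'k)"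
  assumes "lin f" "finite S"
  shows "f (\<lambda>j. \<Sum>i\<in>S. x i * basis_vec i j) = (\<lambda>c. \<Sum>i\<in>S. x i * f (basis_vec i) c)"
  using assms(2)
proof (induction S rule: finite_induct)
  case empty
  then show ?case using lin_zero[OF assms(1)] by simp
next
  case (insert a S)
  have "(\<lambda>j. \<Sum>i\<in>insert a S. x i * basis_vec i j)
      = vadd (smul (x a) (basis_vec a)) (\<lambda>j. \<Sum>i\<in>S. x i * basis_vec i j)"
    using insert by (simp add: vadd_def smul_def)
  then have "f (\<lambda>j. \<Sum>i\<in>insert a S. x i * basis_vec i j)
      = vadd (smul (x a) (f (basis_vec a))) (f (\<lambda>j. \<Sum>i\<in>S. x i * basis_vec i j))"
    using assms(1) by (simp add: lin_def)
  then show ?case using insert by (simp add: vadd_def smul_def)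
qed

lemma lin_expand:
  fixes f :: "('n::finite \<Rightarrow> 'k::field) \<Rightarrow> ('m \<Rightarrow> 'k)"
  assumes "lin f"
  shows "f x = (\<lambda>c. \<Sum>i\<in>UNIV. x i * f (basis_vec i) c)"
  using lin_expand_set[OF assms finite_UNIV, of x] basis_sum[of x] by simp

lemma lin_ext:
  fixes f g :: "('n::finite \<Rightarrow> 'k::field) \<Rightarrow> ('m \<Rightarrow> 'k)"
  assumes "lin f" "lin g" "\<And>p. f (basis_vec p) = g (basis_vec p)"
  shows "f x = g x"
  using lin_expand[OF assms(1), of x] lin_expand[OF assms(2), of x] assms(3) by simp

lemma bilin_ext:
  fixes F G :: "('n::finite \<Rightarrow> 'k::field) \<Rightarrow> ('m::finite \<Rightarrow> 'k) \<Rightarrow> ('l \<Rightarrow> 'k)"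
  assumes "\<And>u. lin (F u)" "\<And>v. lin (\<lambda>u. F u v)"
    "\<And>u. lin (G u)" "\<And>v. lin (\<lambda>u. G u v)"
    "\<And>p q. F (basis_vec p) (basis_vec q) = G (basis_vec p) (basis_vec q)"
  shows "F u v = G u v"
proof -
  have "\<And>p. F (basis_vec p) v = G (basis_vec p) v"
    using lin_ext[OF assms(1) assms(3)] assms(5) by blast
  then show ?thesis using lin_ext[OF assms(2) assms(4)] by blast
qed

lemma lin_comp: "lin f \<Longrightarrow> lin g \<Longrightarrow> lin (\<lambda>x. f (g x))"
  by (simp add: lin_def)

lemma lin_vsub: "lin f \<Longrightarrow> lin g \<Longrightarrow> lin (\<lambda>x. vsub (f x) (g x))"
  by (simp add: lin_def vsub_def vadd_def smul_def fun_eq_iff algebra_simps)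

lemma pair_add1: "pair (vadd a b) y = pair a y + pair b y"
  by (simp add: pair_def vadd_def algebra_simps sum.distrib)
lemma pair_smul1: "pair (smul c a) y = c * pair a y"
  by (simp add: pair_def smul_def algebra_simps sum_distrib_left)
lemma pair_add2: "pair y (vadd a b) = pair y a + pair y b"
  by (simp add: pair_def vadd_def algebra_simps sum.distrib)
lemma pair_smul2: "pair y (smul c a) = c * pair y a"
  by (simp add: pair_def smul_def algebra_simps sum_distrib_left)

lemma lin_coad2: "lin (coad br x)"
  unfolding lin_def coad_def
  by (simp add: pair_def vadd_def smul_def fun_eq_iff algebra_simps sum.distrib sum_distrib_left
      sum_negf[symmetric])

lemma lin_coad1:
  assumes "\<And>y. lin (\<lambda>x. br x y)" shows "lin (\<lambda>x. coad br x \<xi>)"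
proof -
  have a: "br (vadd x y) z = vadd (br x z) (br y z)" "br (smul c x) z = smul c (br x z)" for x y z c
    using assms[of z] unfolding lin_def by auto
  show ?thesis unfolding lin_def coad_def
    by (simp add: a pair_add2 pair_smul2) (simp add: vadd_def smul_def fun_eq_iff)
qed

lemma lin_r_plus: "lin (r_plus r)"
  by (simp add: lin_def r_plus_def vadd_def smul_def fun_eq_iff algebra_simps
      sum.distrib sum_distrib_left)

lemma lin_dual: "lin (dual_map E)"
  unfolding lin_def dual_map_def
  by (simp add: pair_def vadd_def smul_def fun_eq_iff algebra_simps sum.distrib sum_distrib_left)

lemma delta_sum: "(\<Sum>i\<in>(UNIV::'n::finite set). basis_vec p i * (f i::'k::field)) = f p"
  unfolding basis_vec_def by (simp add: if_distrib[where f="\<lambda>x. x * _"] cong: if_cong)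

lemma r_plus_basis: "r_plus r (basis_vec p) = (\<lambda>j. r p j)"
  by (rule ext) (simp add: r_plus_def delta_sum)

lemma pair_basis: "pair (basis_vec q) y = y q"
  by (simp add: pair_def delta_sum)


theorem proposition6p6:
  fixes br :: "('n::finite \<Rightarrow> 'k::field_char_0) \<Rightarrow> ('n \<Rightarrow> 'k) \<Rightarrow> ('n \<Rightarrow> 'k)"
    and E :: "('n \<Rightarrow> 'k) \<Rightarrow> ('n \<Rightarrow> 'k)"
    and r :: "'n \<Rightarrow> 'n \<Rightarrow> 'k"
  assumes "alg_closed TYPE('k)"
    and "ENL_algebra br E"
    and "skew_tensor r"
  shows "ENE_relative_RB br E (dual_map E) (coad br) (r_plus r) \<longleftrightarrow> EN_r_matrix br E r"
proof -
  have lb1: "\<And>y. lin (\<lambda>x. br x y)" and lb2: "\<And>x. lin (br x)"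
    and linE: "lin E" using assms(2) unfolding ENL_algebra_def lie_algebra_def by blast+
  have skew: "\<And>i j. r i j = - r j i" using assms(3) unfolding skew_tensor_def by blast
  define K where "K = r_plus r"
  have br_exp1: "br x y c = (\<Sum>j\<in>UNIV. x j * br (basis_vec j) y c)" for x y c
    using lin_expand[OF lb1[of y], of x] by simp
  have br_exp: "br x y c = (\<Sum>j\<in>UNIV. \<Sum>l\<in>UNIV. x j * y l * br (basis_vec j) (basis_vec l) c)" for x y c
  proof -
    have "br (basis_vec j) y c = (\<Sum>l\<in>UNIV. y l * br (basis_vec j) (basis_vec l) c)" for j
      using lin_expand[OF lb2[of "basis_vec j"], of y] by simp
    then show ?thesis using br_exp1[of x y c] by (simp add: sum_distrib_left mult_ac)
  qed
  have key: "br (K (basis_vec p)) (K (basis_vec q)) c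
      - K (vsub (coad br (K (basis_vec p)) (basis_vec q)) (coad br (K (basis_vec q)) (basis_vec p))) c
      = CYB br r p q c" for p q c
  proof -
    have L: "br (K (basis_vec p)) (K (basis_vec q)) c
        = (\<Sum>j\<in>UNIV. \<Sum>l\<in>UNIV. r p j * r q l * br (basis_vec j) (basis_vec l) c)"
      by (simp add: K_def r_plus_basis br_exp[of "\<lambda>j. r p j"])
    have w: "vsub (coad br (K (basis_vec p)) (basis_vec q)) (coad br (K (basis_vec q)) (basis_vec p)) m
        = - (\<Sum>j\<in>UNIV. r p j * br (basis_vec j) (basis_vec m) q)
          + (\<Sum>k\<in>UNIV. r q k * br (basis_vec k) (basis_vec m) p)" for m
      by (simp add: K_def r_plus_basis vsub_def coad_def pair_basis
          br_exp1[of "\<lambda>j. r p j"] br_exp1[of "\<lambda>j. r q j"])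
    have R: "K (vsub (coad br (K (basis_vec p)) (basis_vec q)) (coad br (K (basis_vec q)) (basis_vec p))) c
        = - (\<Sum>m\<in>UNIV. (\<Sum>j\<in>UNIV. r p j * br (basis_vec j) (basis_vec m) q) * r m c)
          + (\<Sum>m\<in>UNIV. (\<Sum>k\<in>UNIV. r q k * br (basis_vec k) (basis_vec m) p) * r m c)"
      apply (subst (1) K_def)
      apply (simp only: r_plus_def w distrib_right sum.distrib)
      apply (simp add: sum_negf)
      done
    have A: "(\<Sum>m\<in>UNIV. (\<Sum>j\<in>UNIV. r p j * br (basis_vec j) (basis_vec m) q) * r m c)
        = (\<Sum>j\<in>UNIV. \<Sum>k\<in>UNIV. r p j * r k c * br (basis_vec j) (basis_vec k) q)"
      apply (simp add: sum_distrib_right)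
      apply (subst sum.swap)
      apply (simp add: mult_ac)
      done
    have B: "(\<Sum>m\<in>UNIV. (\<Sum>k\<in>UNIV. r q k * br (basis_vec k) (basis_vec m) p) * r m c)
        = - (\<Sum>i\<in>UNIV. \<Sum>k\<in>UNIV. r i q * r k c * br (basis_vec i) (basis_vec k) p)"
    proof -
      define s where "s = (\<lambda>k. r q k)"
      have s_eq: "s = (\<lambda>k. - r k q)" unfolding s_def by (rule ext, rule skew)
      have "(\<Sum>m\<in>UNIV. (\<Sum>k\<in>UNIV. r q k * br (basis_vec k) (basis_vec m) p) * r m c)
          = (\<Sum>m\<in>UNIV. (\<Sum>k\<in>UNIV. s k * br (basis_vec k) (basis_vec m) p) * r m c)"
        by (simp add: s_def)
      also have "\<dots> = - (\<Sum>i\<in>UNIV. \<Sum>k\<in>UNIV. r i q * r k c * br (basis_vec i) (basis_vec k) p)"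
        apply (simp add: s_eq sum_distrib_right sum_negf[symmetric])
        apply (subst sum.swap)
        apply (simp add: mult_ac)
        done
      finally show ?thesis .
    qed
    show ?thesis unfolding L R A B CYB_def by (simp add: algebra_simps)
  qed
  have c1: "(\<forall>u v. br (K u) (K v) = K (vsub (coad br (K u) v) (coad br (K v) u)))
      \<longleftrightarrow> (\<forall>a b c. CYB br r a b c = 0)"
  proof
    assume h: "\<forall>u v. br (K u) (K v) = K (vsub (coad br (K u) v) (coad br (K v) u))"
    show "\<forall>a b c. CYB br r a b c = 0"
    proof (intro allI)
      fix a b c
      show "CYB br r a b c = 0" using key[of a b c] h by simp
    qed
  next
    assume h: "\<forall>a b c. CYB br r a b c = 0"
    have lK: "lin K" by (simp add: K_def lin_r_plus)
    show "\<forall>u v. br (K u) (K v) = K (vsub (coad br (K u) v) (coad br (K v) u))"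
    proof (intro allI)
      fix u v
      show "br (K u) (K v) = K (vsub (coad br (K u) v) (coad br (K v) u))"
      proof (rule bilin_ext[where F="\<lambda>u v. br (K u) (K v)"
            and G="\<lambda>u v. K (vsub (coad br (K u) v) (coad br (K v) u))"])
        show "lin (\<lambda>v. br (K u) (K v))" for u using lin_comp[OF lb2 lK] by simp
        show "lin (\<lambda>u. br (K u) (K v))" for v using lin_comp[OF lb1 lK] by simp
        show "lin (\<lambda>v. K (vsub (coad br (K u) v) (coad br (K v) u)))" for u
          using lin_comp[OF lK lin_vsub[OF lin_coad2 lin_comp[OF lin_coad1[OF lb1] lK]]] by simp
        show "lin (\<lambda>u. K (vsub (coad br (K u) v) (coad br (K v) u)))" for v
          using lin_comp[OF lK lin_vsub[OF lin_comp[OF lin_coad1[OF lb1] lK] lin_coad2]] by simp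
        show "br (K (basis_vec p)) (K (basis_vec q)) = K (vsub (coad br (K (basis_vec p)) (basis_vec q))
            (coad br (K (basis_vec q)) (basis_vec p)))" for p q
          using key[of p q] h by (auto simp: fun_eq_iff)
      qed
    qed
  qed
  have key2: "E (K (basis_vec p)) b - K (dual_map E (basis_vec p)) b = IdE_minus_EId E r p b" for p b
    using lin_expand[OF linE, of "K (basis_vec p)"]
    by (simp add: K_def r_plus_basis IdE_minus_EId_def r_plus_def dual_map_def pair_basis delta_sum mult_ac)
  have c2: "(\<forall>u. E (K u) = K (dual_map E u)) \<longleftrightarrow> (\<forall>a b. IdE_minus_EId E r a b = 0)"
  proof
    assume h: "\<forall>u. E (K u) = K (dual_map E u)"
    show "\<forall>a b. IdE_minus_EId E r a b = 0" using key2 h by (metis right_minus_eq)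
  next
    assume h: "\<forall>a b. IdE_minus_EId E r a b = 0"
    have lK: "lin K" by (simp add: K_def lin_r_plus)
    show "\<forall>u. E (K u) = K (dual_map E u)"
    proof
      fix u
      show "E (K u) = K (dual_map E u)"
      proof (rule lin_ext[where f="\<lambda>u. E (K u)" and g="\<lambda>u. K (dual_map E u)"])
        show "lin (\<lambda>u. E (K u))" using lin_comp[OF linE lK] .
        show "lin (\<lambda>u. K (dual_map E u))" using lin_comp[OF lK lin_dual] .
        show "E (K (basis_vec p)) = K (dual_map E (basis_vec p))" for p
          using key2[of p] h by (auto simp: fun_eq_iff)
      qed
    qed
  qed
  show ?thesis
    unfolding ENE_relative_RB_def EN_r_matrix_def
    using c1 c2 by (simp add: K_def lin_r_plus)
qed

end
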